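(* Consider the following idealized round-based model of Probabilistic Delta Debugging (ProbDD). A finite list $L$ of elements is to be minimized with respect to a property $\psi$ (a predicate on sublists of $L$, true on $L$). Every element $u$ of $L$ carries a probability $u.p$, and initially $u.p = p_0$ for all elements, for a fixed $p_0\in(0,1)$. The algorithm proceeds in rounds $r=1,2,\dots$. In each round a subset size $s$ is fixed, the current list $L$ is partitioned into subsets of size $s$, and each subset $S$ is attempted for deletion in turn: if $\psi(L\setminus S)$ holds, then $L$ is replaced by $L\setminus S$ (the elements of $S$ are removed); otherwise, the probability of each element $u\in S$ is updated to $$u.p \leftarrow \frac{u.p}{1-\prod_{v\in S}(1-v.p)}.$$ Suppose that in every round the number of elements of the current list $L$ is divisible by that round's subset size, so that every subset of the round has exactly $s$ elements. Then after each round, all elements remaining in $L$ have the same probability.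
   Context: In ProbDD, a round is a phase during which every remaining element has been attempted for deletion (as part of some subset) exactly once; the subset size is constant within a round. The probabilities are only modified by the update rule above, which is applied to the elements of a subset whose deletion failed to preserve $\psi$. *)

theory Defs
  imports Complex_Main
begin

type_synonym 'a pstate = "'a list \<times> ('a \<Rightarrow> real)"

fun run_subsets :: "('a list \<Rightarrow> bool) \<Rightarrow> 'a set list \<Rightarrow> 'a pstate \<Rightarrow> 'a pstate" where
  "run_subsets psi [] st = st"
| "run_subsets psi (S # Ss) (L, p) =
     (let L' = filter (\<lambda>x. x \<notin> S) L in
      if psi L' then run_subsets psi Ss (L', p)
      else run_subsets psi Ss
             (L, (\<lambda>u. if u \<in> S then p u / (1 - (\<Prod>v\<in>S. (1 - p v))) else p u)))"

definition is_partition :: "'a list \<Rightarrow> nat \<Rightarrow> 'a set list \<Rightarrow> bool" where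
  "is_partition L s Ss \<longleftrightarrow>
     (\<forall>S\<in>set Ss. card S = s) \<and>
     (\<forall>i<length Ss. \<forall>j<length Ss. i \<noteq> j \<longrightarrow> Ss ! i \<inter> Ss ! j = {}) \<and>
     \<Union>(set Ss) = set L"

inductive probdd_after_rounds ::
  "('a list \<Rightarrow> bool) \<Rightarrow> 'a list \<Rightarrow> real \<Rightarrow> 'a pstate \<Rightarrow> bool"
  for psi L0 p0 where
  init: "probdd_after_rounds psi L0 p0 (L0, (\<lambda>_. p0))"
| round: "probdd_after_rounds psi L0 p0 (L, p) \<Longrightarrow> 0 < s \<Longrightarrow> s dvd length L \<Longrightarrow>
          is_partition L s Ss \<Longrightarrow>
          probdd_after_rounds psi L0 p0 (run_subsets psi Ss (L, p))"

end

theory Submission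
  imports Defs
begin

fun disj :: "'a set list \<Rightarrow> bool" where
  "disj [] = True"
| "disj (S # Ss) = (S \<inter> \<Union>(set Ss) = {} \<and> disj Ss)"

lemma disj_of_idx:
  "(\<forall>i<length Ss. \<forall>j<length Ss. i \<noteq> j \<longrightarrow> Ss ! i \<inter> Ss ! j = {}) \<Longrightarrow> disj Ss"
proof (induction Ss)
  case Nil
  then show ?case by simp
next
  case (Cons S Ss)
  have a: "\<forall>i<length Ss. \<forall>j<length Ss. i \<noteq> j \<longrightarrow> Ss ! i \<inter> Ss ! j = {}"
  proof (intro allI impI)
    fix i j assume "i < length Ss" "j < length Ss" "i \<noteq> j"
    then show "Ss ! i \<inter> Ss ! j = {}" using Cons.prems[rule_format, of "Suc i" "Suc j"] by simp
  qed
  have b: "S \<inter> \<Union>(set Ss) = {}"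
  proof -
    { fix x T assume "x \<in> S" "T \<in> set Ss" "x \<in> T"
      then obtain j where "j < length Ss" "Ss ! j = T" by (auto simp: in_set_conv_nth)
      then have False using Cons.prems[rule_format, of 0 "Suc j"] \<open>x \<in> S\<close> \<open>x \<in> T\<close> by auto }
    then show ?thesis by blast
  qed
  show ?case using Cons.IH[OF a] b by simp
qed

lemma run_inv:
  assumes "disj Ss" "\<forall>S\<in>set Ss. card S = s" "\<forall>u\<in>\<Union>(set Ss). p u = q"
    "run_subsets psi Ss (L, p) = (L', p')"
  shows "set L' \<subseteq> set L \<and>
    (\<forall>u\<in>set L'. p' u = (if u \<in> \<Union>(set Ss) then q / (1 - (1 - q) ^ s) else p u))"
  using assms
proof (induction Ss arbitrary: L p)
  case Nil
  then show ?case by simp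
next
  case (Cons S Ss)
  define L2 where "L2 = filter (\<lambda>x. x \<notin> S) L"
  show ?case
  proof (cases "psi L2")
    case True
    then have r: "run_subsets psi Ss (L2, p) = (L', p')" using Cons.prems(4) by (simp add: L2_def Let_def)
    have h: "set L' \<subseteq> set L2 \<and> (\<forall>u\<in>set L'. p' u = (if u \<in> \<Union>(set Ss) then q / (1 - (1 - q) ^ s) else p u))"
      using Cons.IH[of p L2, OF _ _ _ r] Cons.prems(1,2,3) by simp
    show ?thesis
    proof (intro conjI ballI)
      show "set L' \<subseteq> set L" using h by (auto simp: L2_def)
      fix u assume u: "u \<in> set L'"
      then have "u \<notin> S" using h by (auto simp: L2_def)
      then show "p' u = (if u \<in> \<Union>(set (S # Ss)) then q / (1 - (1 - q) ^ s) else p u)"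
        using h u Cons.prems(3) by auto
    qed
  next
    case False
    define p1 where "p1 = (\<lambda>u. if u \<in> S then p u / (1 - (\<Prod>v\<in>S. (1 - p v))) else p u)"
    then have r: "run_subsets psi Ss (L, p1) = (L', p')" using Cons.prems(4) False by (simp add: L2_def Let_def)
    have pq: "\<forall>u\<in>\<Union>(set Ss). p1 u = q" using Cons.prems(1,3) by (auto simp: p1_def)
    have h: "set L' \<subseteq> set L \<and> (\<forall>u\<in>set L'. p' u = (if u \<in> \<Union>(set Ss) then q / (1 - (1 - q) ^ s) else p1 u))"
      using Cons.IH[of p1 L, OF _ _ pq r] Cons.prems(1,2) by simp
    have prod: "(\<Prod>v\<in>S. (1 - p v)) = (1 - q) ^ s"
    proof -
      have "(\<Prod>v\<in>S. (1 - p v)) = (\<Prod>v\<in>S. (1 - q))" using Cons.prems(3) by (intro prod.cong) auto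
      also have "\<dots> = (1 - q) ^ card S" by simp
      finally show ?thesis using Cons.prems(2) by simp
    qed
    show ?thesis
    proof (intro conjI ballI)
      show "set L' \<subseteq> set L" using h by auto
      fix u assume u: "u \<in> set L'"
      show "p' u = (if u \<in> \<Union>(set (S # Ss)) then q / (1 - (1 - q) ^ s) else p u)"
        using h u Cons.prems(3) prod by (auto simp: p1_def)
    qed
  qed
qed

lemma main_inv:
  assumes "probdd_after_rounds psi L0 p0 st"
  shows "\<forall>u\<in>set (fst st). \<forall>v\<in>set (fst st). snd st u = snd st v"
  using assms
proof (induction st rule: probdd_after_rounds.induct)
  case init
  then show ?case by simp
next
  case (round L1 p1 s Ss)
  obtain L' p' where e: "run_subsets psi Ss (L1, p1) = (L', p')" by (cases "run_subsets psi Ss (L1, p1)")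
  have part: "\<forall>S\<in>set Ss. card S = s" "disj Ss" "\<Union>(set Ss) = set L1"
    using round.hyps(4) disj_of_idx by (auto simp: is_partition_def)
  have pq: "\<forall>u\<in>\<Union>(set Ss). p1 u = p1 (hd L1)"
  proof (cases L1)
    case Nil
    then show ?thesis using part(3) by auto
  next
    case (Cons a l)
    then have "hd L1 \<in> set L1" by simp
    then show ?thesis using round.IH part(3) by (metis fst_conv snd_conv)
  qed
  note h = run_inv[OF part(2) part(1) pq e]
  have "\<forall>u\<in>set L'. \<forall>v\<in>set L'. p' u = p' v"
  proof (intro ballI)
    fix u v assume "u \<in> set L'" "v \<in> set L'"
    then have "u \<in> set L1" "v \<in> set L1" using h by auto
    then have "u \<in> \<Union>(set Ss)" "v \<in> \<Union>(set Ss)" using part(3) by auto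
    then show "p' u = p' v" using h \<open>u \<in> set L'\<close> \<open>v \<in> set L'\<close> by (metis (no_types, lifting))
  qed
  then show ?case unfolding e fst_conv snd_conv .
qed

theorem lemma1:
  fixes psi :: "'a list \<Rightarrow> bool" and L0 :: "'a list" and p0 :: real
    and L :: "'a list" and p :: "'a \<Rightarrow> real"
  assumes "distinct L0" and "psi L0" and "0 < p0" and "p0 < 1"
    and "probdd_after_rounds psi L0 p0 (L, p)"
  shows "\<forall>u\<in>set L. \<forall>v\<in>set L. p u = p v"
  using main_inv[OF assms(5)] unfolding fst_conv snd_conv .

end
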